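(* Assume Assumption (A) and the Simultaneous Geometric Drift condition (GD) hold with drift function $V$, and $\sup_{x\in C}V(x)<\infty$. Then Assumption (L) holds for every function $f$ such that $\|f\|_{V^{1/2-\delta}}<\infty$ for some $\delta>0$.
   Context: Family of $\pi$-invariant Markov kernels $\{P_\gamma\}_{\gamma\in\Gamma}$ on $(\mathcal X,\mathcal B(\mathcal X))$. Assumption (A): each $P_\gamma$ is $\pi$-invariant, $\pi$-irreducible and aperiodic; and there exist $C$ with $\pi(C)>0$, a probability measure $\nu$ and $\delta_0>0$ with $P_\gamma(x,\cdot)\ge\delta_0\nu(\cdot)$ for all $x\in C,\gamma\in\Gamma$. (GD): there exist $V:\mathcal X\to[1,\infty)$, $\lambda\in(0,1)$, $b<\infty$ with $P_\gamma V\le\lambda V+b1_C$ for all $\gamma$. Split chain: $\mathbb P(Y_{n-1}=1\mid X_{n-1})=\delta_0 1_C(X_{n-1})$, $X_n\sim\nu$ if $Y_{n-1}=1$, else $X_n\sim (P_\gamma(X_{n-1},\cdot)-\delta_0\nu1_C(X_{n-1}))/(1-\delta_01_C(X_{n-1}))$; regeneration time $T=\inf\{n\ge1:Y_{n-1}=1\}$; $\mathbb E_{\nu,\gamma}$ is expectation for the split chain of $P_\gamma$ with $X_0\sim\nu$. Assumption (L) for $f$: for some $\delta'>0$, $\sup_{\gamma\in\Gamma}\mathbb E_{\nu,\gamma}\big|\sum_{j=0}^{T-1}f(X_j)\big|^{2+\delta'}<\infty$. $\|g\|_W=\sup_x|g(x)|/W(x)$. *)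

theory Defs
  imports "HOL-Probability.Probability"
begin

definition markov_kernel :: "'a measure \<Rightarrow> ('a \<Rightarrow> 'a measure) \<Rightarrow> bool" where
  "markov_kernel M P \<longleftrightarrow> P \<in> measurable M (prob_algebra M)"

primrec kernel_pow :: "('a \<Rightarrow> 'a measure) \<Rightarrow> nat \<Rightarrow> 'a \<Rightarrow> 'a set \<Rightarrow> ennreal" where
  "kernel_pow P 0 x A = indicator A x"
| "kernel_pow P (Suc n) x A = (\<integral>\<^sup>+ y. kernel_pow P n y A \<partial>(P x))"

definition invariant_kernel :: "'a measure \<Rightarrow> ('a \<Rightarrow> 'a measure) \<Rightarrow> 'a measure \<Rightarrow> bool" where
  "invariant_kernel M P \<pi> \<longleftrightarrow>
     (\<forall>A\<in>sets M. (\<integral>\<^sup>+ x. emeasure (P x) A \<partial>\<pi>) = emeasure \<pi> A)"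

definition irreducible_kernel :: "'a measure \<Rightarrow> ('a \<Rightarrow> 'a measure) \<Rightarrow> 'a measure \<Rightarrow> bool" where
  "irreducible_kernel M P \<pi> \<longleftrightarrow>
     (\<forall>A\<in>sets M. emeasure \<pi> A > 0 \<longrightarrow> (\<forall>x\<in>space M. \<exists>n\<ge>1. kernel_pow P n x A > 0))"

text \<open>Aperiodicity (Roberts--Rosenthal): no d-cycle of disjoint measurable sets, d \<ge> 2,
  with positive stationary mass.\<close>
definition aperiodic_kernel :: "'a measure \<Rightarrow> ('a \<Rightarrow> 'a measure) \<Rightarrow> 'a measure \<Rightarrow> bool" where
  "aperiodic_kernel M P \<pi> \<longleftrightarrow>
     \<not> (\<exists>d::nat. d \<ge> 2 \<and> (\<exists>X :: nat \<Rightarrow> 'a set.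
           (\<forall>i<d. X i \<in> sets M) \<and> disjoint_family_on X {..<d} \<and> emeasure \<pi> (X 0) > 0 \<and>
           (\<forall>i<d. \<forall>x\<in>X i. emeasure (P x) (X (Suc i mod d)) = 1)))"

definition assumption_A ::
  "'a measure \<Rightarrow> 'g set \<Rightarrow> ('g \<Rightarrow> 'a \<Rightarrow> 'a measure) \<Rightarrow> 'a measure \<Rightarrow> 'a set \<Rightarrow> 'a measure \<Rightarrow> real \<Rightarrow> bool"
  where
  "assumption_A M \<Gamma> P \<pi> C \<nu> \<delta>0 \<longleftrightarrow>
     prob_space \<pi> \<and> sets \<pi> = sets M \<and>
     (\<forall>\<gamma>\<in>\<Gamma>. markov_kernel M (P \<gamma>) \<and> invariant_kernel M (P \<gamma>) \<pi> \<and>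
               irreducible_kernel M (P \<gamma>) \<pi> \<and> aperiodic_kernel M (P \<gamma>) \<pi>) \<and>
     C \<in> sets M \<and> emeasure \<pi> C > 0 \<and>
     prob_space \<nu> \<and> sets \<nu> = sets M \<and> \<delta>0 > 0 \<and>
     (\<forall>\<gamma>\<in>\<Gamma>. \<forall>x\<in>C. \<forall>A\<in>sets M. ennreal \<delta>0 * emeasure \<nu> A \<le> emeasure (P \<gamma> x) A)"

definition drift_GD ::
  "'a measure \<Rightarrow> 'g set \<Rightarrow> ('g \<Rightarrow> 'a \<Rightarrow> 'a measure) \<Rightarrow> 'a set \<Rightarrow> ('a \<Rightarrow> real) \<Rightarrow> real \<Rightarrow> real \<Rightarrow> bool"
  where
  "drift_GD M \<Gamma> P C V lam b \<longleftrightarrow>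
     V \<in> borel_measurable M \<and> (\<forall>x\<in>space M. V x \<ge> 1) \<and> 0 < lam \<and> lam < 1 \<and>
     (\<forall>\<gamma>\<in>\<Gamma>. \<forall>x\<in>space M.
        (\<integral>\<^sup>+ y. ennreal (V y) \<partial>(P \<gamma> x)) \<le> ennreal (lam * V x + b * indicator C x))"

definition W_norm_finite :: "'a measure \<Rightarrow> ('a \<Rightarrow> real) \<Rightarrow> ('a \<Rightarrow> real) \<Rightarrow> bool" where
  "W_norm_finite M W g \<longleftrightarrow> (\<exists>K::real. \<forall>x\<in>space M. \<bar>g x\<bar> \<le> K * W x)"

definition split_residual ::
  "'a measure \<Rightarrow> ('a \<Rightarrow> 'a measure) \<Rightarrow> 'a set \<Rightarrow> real \<Rightarrow> 'a measure \<Rightarrow> 'a \<Rightarrow> 'a measure" where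
  "split_residual M P C \<delta>0 \<nu> x =
     measure_of (space M) (sets M)
       (\<lambda>A. (emeasure (P x) A - ennreal (\<delta>0 * indicator C x) * emeasure \<nu> A)
            / (1 - ennreal (\<delta>0 * indicator C x)))"

text \<open>split_path ... n x g = E[g((X_0,Y_0),...,(X_n,Y_n)) | X_0 = x] for the split chain
  of kernel P: Y_j ~ Bernoulli(\<delta>0 1_C(X_j)) given X_j, and X_{j+1} ~ \<nu> if Y_j = 1,
  else X_{j+1} ~ residual kernel at X_j.\<close>
primrec split_path ::
  "'a measure \<Rightarrow> ('a \<Rightarrow> 'a measure) \<Rightarrow> 'a set \<Rightarrow> real \<Rightarrow> 'a measure \<Rightarrow> nat \<Rightarrow> 'a
     \<Rightarrow> (('a \<times> bool) list \<Rightarrow> ennreal) \<Rightarrow> ennreal" where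
  "split_path M P C \<delta>0 \<nu> 0 x g =
     (\<integral>\<^sup>+ y. g [(x, y)] \<partial>measure_pmf (bernoulli_pmf (\<delta>0 * indicator C x)))"
| "split_path M P C \<delta>0 \<nu> (Suc n) x g =
     (\<integral>\<^sup>+ y. (\<integral>\<^sup>+ x'. split_path M P C \<delta>0 \<nu> n x' (\<lambda>zs. g ((x, y) # zs))
                 \<partial>(if y then \<nu> else split_residual M P C \<delta>0 \<nu> x))
        \<partial>measure_pmf (bernoulli_pmf (\<delta>0 * indicator C x)))"

definition split_exp ::
  "'a measure \<Rightarrow> ('a \<Rightarrow> 'a measure) \<Rightarrow> 'a set \<Rightarrow> real \<Rightarrow> 'a measure \<Rightarrow> nat
     \<Rightarrow> (('a \<times> bool) list \<Rightarrow> ennreal) \<Rightarrow> ennreal" where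
  "split_exp M P C \<delta>0 \<nu> n g = (\<integral>\<^sup>+ x. split_path M P C \<delta>0 \<nu> n x g \<partial>\<nu>)"

text \<open>On a path prefix zs = [Z_0,...,Z_n]: the event T = n+1, i.e. Y_n = 1 and Y_j = 0 for j < n.\<close>
definition regen_at :: "nat \<Rightarrow> ('a \<times> bool) list \<Rightarrow> bool" where
  "regen_at n zs \<longleftrightarrow> snd (zs ! n) \<and> (\<forall>j<n. \<not> snd (zs ! j))"

text \<open>Assumption (L) for f: T is a.s. finite under every P_\<gamma>, and
  sup_\<gamma> E_{\<nu>,\<gamma>} |sum_{j<T} f(X_j)|^{2+\<delta>'} < \<infin>, the expectation being
  sum_{n} E[ |sum_{j\<le>n} f(X_j)|^{2+\<delta>'} ; T = n+1 ].\<close>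
definition assumption_L ::
  "'a measure \<Rightarrow> 'g set \<Rightarrow> ('g \<Rightarrow> 'a \<Rightarrow> 'a measure) \<Rightarrow> 'a set \<Rightarrow> real \<Rightarrow> 'a measure
     \<Rightarrow> ('a \<Rightarrow> real) \<Rightarrow> bool" where
  "assumption_L M \<Gamma> P C \<delta>0 \<nu> f \<longleftrightarrow>
     (\<exists>\<delta>'>0.
       (\<forall>\<gamma>\<in>\<Gamma>. (\<Sum>n. split_exp M (P \<gamma>) C \<delta>0 \<nu> n
                        (\<lambda>zs. if regen_at n zs then 1 else 0)) = 1) \<and>
       (SUP \<gamma>\<in>\<Gamma>. (\<Sum>n. split_exp M (P \<gamma>) C \<delta>0 \<nu> n
            (\<lambda>zs. if regen_at n zs
                  then ennreal (\<bar>\<Sum>j\<le>n. f (fst (zs ! j))\<bar> powr (2 + \<delta>'))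
                  else 0))) < \<infinity>)"

end

theory Submission
  imports Defs "HOL-Real_Asymp.Real_Asymp"
begin


lemma nn_integral_superadd:
  "integral\<^sup>N M f + integral\<^sup>N M g \<le> (\<integral>\<^sup>+x. f x + g x \<partial>M)"
proof -
  let ?A = "{h. simple_function M h \<and> h \<le> f}"
  let ?B = "{h. simple_function M h \<and> h \<le> g}"
  have "(\<lambda>_. 0) \<in> ?A" "(\<lambda>_. 0) \<in> ?B" by (auto simp: le_fun_def)
  then have nA: "?A \<noteq> {}" and nB: "?B \<noteq> {}" by blast+
  have "integral\<^sup>N M f + integral\<^sup>N M g = (SUP a\<in>?A. integral\<^sup>S M a) + (SUP b\<in>?B. integral\<^sup>S M b)"
    unfolding nn_integral_def ..
  also have "\<dots> = (SUP a\<in>?A. (SUP b\<in>?B. integral\<^sup>S M a + integral\<^sup>S M b))"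
    by (simp add: ennreal_SUP_add_left[OF nA, symmetric] ennreal_SUP_add_right[OF nB, symmetric])
  also have "\<dots> \<le> (\<integral>\<^sup>+x. f x + g x \<partial>M)"
  proof (intro SUP_least)
    fix a b assume a: "a \<in> ?A" and b: "b \<in> ?B"
    have "integral\<^sup>S M a + integral\<^sup>S M b = integral\<^sup>S M (\<lambda>x. a x + b x)"
      using a b by (simp add: simple_integral_add)
    also have "\<dots> = (\<integral>\<^sup>+x. a x + b x \<partial>M)"
      using a b by (simp add: nn_integral_eq_simple_integral simple_function_add)
    also have "\<dots> \<le> (\<integral>\<^sup>+x. f x + g x \<partial>M)"
      using a b by (intro nn_integral_mono) (auto simp: le_fun_def intro: add_mono)
    finally show "integral\<^sup>S M a + integral\<^sup>S M b \<le> (\<integral>\<^sup>+x. f x + g x \<partial>M)" .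
  qed
  finally show ?thesis .
qed

lemma nn_integral_superadd_sum:
  assumes "finite I"
  shows "(\<Sum>i\<in>I. integral\<^sup>N M (f i)) \<le> (\<integral>\<^sup>+x. (\<Sum>i\<in>I. f i x) \<partial>M)"
  using assms
proof (induction I rule: finite_induct)
  case empty then show ?case by simp
next
  case (insert i I)
  have "(\<Sum>i\<in>insert i I. integral\<^sup>N M (f i)) = integral\<^sup>N M (f i) + (\<Sum>i\<in>I. integral\<^sup>N M (f i))"
    using insert by simp
  also have "\<dots> \<le> integral\<^sup>N M (f i) + (\<integral>\<^sup>+x. (\<Sum>i\<in>I. f i x) \<partial>M)"
    using insert by (intro add_left_mono) 
  also have "\<dots> \<le> (\<integral>\<^sup>+x. f i x + (\<Sum>i\<in>I. f i x) \<partial>M)"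
    by (rule nn_integral_superadd)
  also have "\<dots> = (\<integral>\<^sup>+x. (\<Sum>i\<in>insert i I. f i x) \<partial>M)"
    using insert by simp
  finally show ?case .
qed


lemma simple_integral_scale_measure_any:
  "integral\<^sup>S (scale_measure r M) g = r * integral\<^sup>S M g"
  unfolding simple_integral_def
  by (simp add: space_scale_measure sum_distrib_left mult.left_commute)

lemma nn_integral_scale_measure_any:
  "nn_integral (scale_measure r M) f = r * nn_integral M f"
proof -
  have sf: "simple_function (scale_measure r M) g = simple_function M g" for g
    unfolding simple_function_def by (simp add: space_scale_measure)
  have ne: "{g. simple_function M g \<and> g \<le> f} \<noteq> {}"
  proof -
    have "(\<lambda>_. 0) \<in> {g. simple_function M g \<and> g \<le> f}" by (auto simp: le_fun_def)
    then show ?thesis by blast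
  qed
  show ?thesis
    unfolding nn_integral_def sf simple_integral_scale_measure_any
    by (simp add: SUP_mult_left_ennreal)
qed


lemma ineqC: fixes a b d k ll vv :: real
  assumes "ll * vv \<le> k * vv" "(1-d/2) * a \<le> k * a" "b \<le> d/2 * a"
  shows "a*(1-d) + (ll * vv + b) \<le> k*(a+vv)"
proof -
  have "a*(1-d) + (ll * vv + b) = (1-d/2) * a + ll * vv + (b - d/2 * a)" by (simp add: algebra_simps)
  also have "\<dots> \<le> k * a + k * vv + 0" using assms by (intro add_mono) auto
  also have "\<dots> = k*(a+vv)" by (simp add: algebra_simps)
  finally show ?thesis .
qed
lemma ineqN: fixes a k ll vv :: real
  assumes "(k - ll)*1 \<le> (k - ll) * vv" "a*(1-k) \<le> k - ll"
  shows "a + ll * vv \<le> k*(a+vv)"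
proof -
  have "a + ll * vv = a*(1-k) + k * a + ll * vv" by (simp add: algebra_simps)
  also have "\<dots> \<le> (k - ll) * vv + k * a + ll * vv" using assms by simp
  also have "\<dots> = k*(a+vv)" by (simp add: algebra_simps)
  finally show ?thesis .
qed

lemma ineqStep: fixes s c1 vv t p u k th v w :: real
  assumes "u * (1 - k) = 1" "v * (1 - th * k) = 1" "0 \<le> c1" "0 \<le> t" "vv \<le> w" "p \<le> w"
  shows "(s + c1 * vv + t) * p + (s + c1 * vv) * (1 - p) + (c1 * u + t * th * v) * (k * w)
     \<le> s + (c1 * u + t * v) * w"
proof -
  have uk: "u * k = u - 1" using assms(1) by (simp add: algebra_simps)
  have vk: "th * k * v = v - 1" using assms(2) by (simp add: algebra_simps)
  have "(s + c1 * vv + t) * p + (s + c1 * vv) * (1 - p) + (c1 * u + t * th * v) * (k * w)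
      = s + c1 * vv + t * p + c1 * (u * k) * w + t * (th * k * v) * w"
    by (simp add: algebra_simps)
  also have "\<dots> = s + c1 * vv + t * p + c1 * (u - 1) * w + t * (v - 1) * w"
    unfolding uk vk ..
  also have "\<dots> = s + (c1 * u + t * v) * w + c1 * (vv - w) + t * (p - w)"
    by (simp add: algebra_simps)
  also have "\<dots> \<le> s + (c1 * u + t * v) * w + 0 + 0"
    using assms by (intro add_mono mult_nonneg_nonpos) auto
  finally show ?thesis by simp
qed

definition aW :: "real \<Rightarrow> real \<Rightarrow> real" where "aW b0 d0 = 2 * b0 / d0 + 1"
definition kap :: "real \<Rightarrow> real \<Rightarrow> real \<Rightarrow> real" where
  "kap lam b0 d0 = 1 - min (d0 / 2) ((1 - lam) / (aW b0 d0 + 1))"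

lemma kap_props:
  assumes "0 < lam" "lam < 1" "0 \<le> b0" "0 < d0"
  shows "0 < kap lam b0 d0" "kap lam b0 d0 < 1" "lam \<le> kap lam b0 d0"
    "1 - d0 / 2 \<le> kap lam b0 d0" "aW b0 d0 * (1 - kap lam b0 d0) \<le> kap lam b0 d0 - lam"
    "1 \<le> aW b0 d0" "b0 \<le> d0 / 2 * aW b0 d0"
proof -
  let ?a = "aW b0 d0"
  have a1: "1 \<le> ?a" using assms by (simp add: aW_def)
  have "b0 \<le> d0 / 2 * ?a" using assms by (simp add: aW_def field_simps)
  then show "b0 \<le> d0 / 2 * ?a" .
  show "1 \<le> ?a" by (rule a1)
  let ?e = "min (d0 / 2) ((1 - lam) / (?a + 1))"
  have e0: "0 < ?e" using assms a1 by auto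
  have e1: "?e \<le> (1 - lam) / (?a + 1)" by simp
  have "?e * (?a + 1) \<le> (1 - lam) / (?a + 1) * (?a + 1)" using e1 a1 by (intro mult_right_mono) auto
  then have e2: "?e * (?a + 1) \<le> 1 - lam" using a1 by simp
  have e3: "?e \<le> (1 - lam) / 2"
  proof -
    have "(1 - lam) / (?a + 1) \<le> (1 - lam) / 2"
      using a1 assms by (intro divide_left_mono) auto
    then show ?thesis using e1 by linarith
  qed
  show "0 < kap lam b0 d0" using e3 assms by (simp add: kap_def)
  show "kap lam b0 d0 < 1" using e0 by (simp add: kap_def)
  show "lam \<le> kap lam b0 d0" using e3 assms by (simp add: kap_def)
  have "?e \<le> d0 / 2" by (rule min.cobounded1)
  then show "1 - d0 / 2 \<le> kap lam b0 d0" unfolding kap_def by linarith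
  have k: "kap lam b0 d0 = 1 - ?e" by (simp add: kap_def)
  have e4: "?a * ?e + ?e \<le> 1 - lam" using e2 by (simp add: algebra_simps)
  have "?a * (1 - (1 - ?e)) = ?a * ?e" by simp
  then show "?a * (1 - kap lam b0 d0) \<le> kap lam b0 d0 - lam"
    unfolding k using e4 by linarith
qed

locale kern =
  fixes M :: "'a measure" and Pk :: "'a \<Rightarrow> 'a measure" and C :: "'a set" and d0 :: real
    and nu :: "'a measure" and V :: "'a \<Rightarrow> real" and lam b0 Vs :: real
  assumes Pk: "Pk \<in> measurable M (prob_algebra M)"
    and CM: "C \<in> sets M" and Cne: "C \<noteq> {}"
    and nu: "prob_space nu" and sets_nu: "sets nu = sets M"
    and d0: "0 < d0"
    and minor: "\<forall>x\<in>C. \<forall>A\<in>sets M. ennreal d0 * emeasure nu A \<le> emeasure (Pk x) A"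
    and Vm: "V \<in> borel_measurable M" and V1: "\<forall>x\<in>space M. 1 \<le> V x"
    and lam: "0 < lam" "lam < 1" and b0: "0 \<le> b0"
    and drift: "\<forall>x\<in>space M. (\<integral>\<^sup>+y. ennreal (V y) \<partial>Pk x) \<le> ennreal (lam * V x + b0 * indicator C x)"
    and Vs: "\<forall>x\<in>C. V x \<le> Vs"
begin

definition pp :: "'a \<Rightarrow> real" where "pp x = d0 * indicator C x"

definition Q :: "'a \<Rightarrow> 'a measure" where
  "Q x = measure_of (space M) (sets M) (\<lambda>A. ennreal (measure (Pk x) A - pp x * measure nu A))"

abbreviation R where "R \<equiv> split_residual M Pk C d0 nu"

lemma Pk_x: assumes "x \<in> space M" shows "prob_space (Pk x)" "sets (Pk x) = sets M"
  using measurable_space[OF Pk assms] by (auto simp: space_prob_algebra)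

lemma space_Pk: "x \<in> space M \<Longrightarrow> space (Pk x) = space M"
  using Pk_x(2) sets_eq_imp_space_eq by blast

lemma space_nu: "space nu = space M"
  using sets_nu sets_eq_imp_space_eq by blast

lemma C_sub: "C \<subseteq> space M" using CM sets.sets_into_space by blast

lemma d1: "d0 \<le> 1"
proof -
  obtain x0 where x0: "x0 \<in> C" using Cne by blast
  then have xs: "x0 \<in> space M" using C_sub by blast
  have "ennreal d0 * emeasure nu (space M) \<le> emeasure (Pk x0) (space M)"
    using minor x0 by auto
  then have "ennreal d0 \<le> 1"
    using prob_space.emeasure_space_1[OF nu] prob_space.emeasure_space_1[OF Pk_x(1)[OF xs]]
      space_nu space_Pk[OF xs] by simp
  then show ?thesis by (simp add: ennreal_le_1)
qed

lemma pp_ge0: "0 \<le> pp x" and pp_le1: "pp x \<le> 1"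
  using d0 d1 by (auto simp: pp_def indicator_def)

lemma minor_real:
  assumes x: "x \<in> space M" and A: "A \<in> sets M"
  shows "pp x * measure nu A \<le> measure (Pk x) A"
proof (cases "x \<in> C")
  case True
  have "ennreal d0 * emeasure nu A \<le> emeasure (Pk x) A" using minor True A by auto
  then have "ennreal (d0 * measure nu A) \<le> ennreal (measure (Pk x) A)"
    using finite_measure.emeasure_eq_measure[OF prob_space.finite_measure[OF nu]] finite_measure.emeasure_eq_measure[OF prob_space.finite_measure[OF Pk_x(1)[OF x]]] d0
    by (simp add: ennreal_mult'')
  then show ?thesis using True by (simp add: pp_def)
next
  case False then show ?thesis by (simp add: pp_def)
qed

lemma Q_ca:
  assumes x: "x \<in> space M"
  shows "countably_additive (sets M) (\<lambda>A. ennreal (measure (Pk x) A - pp x * measure nu A))"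
  unfolding countably_additive_def
proof (intro allI impI)
  fix A :: "nat \<Rightarrow> 'a set" assume A: "range A \<subseteq> sets M" "disjoint_family A" "\<Union>(range A) \<in> sets M"
  interpret P: prob_space "Pk x" using Pk_x[OF x] by simp
  interpret N: prob_space nu by (rule nu)
  have s1: "(\<lambda>i. measure (Pk x) (A i)) sums measure (Pk x) (\<Union>i. A i)"
    using A Pk_x(2)[OF x] by (intro measure_UNION) (auto simp: P.emeasure_finite)
  have s2: "(\<lambda>i. measure nu (A i)) sums measure nu (\<Union>i. A i)"
    using A sets_nu by (intro measure_UNION) (auto simp: N.emeasure_finite)
  have s3: "(\<lambda>i. measure (Pk x) (A i) - pp x * measure nu (A i)) sums
      (measure (Pk x) (\<Union>i. A i) - pp x * measure nu (\<Union>i. A i))"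
    by (intro sums_diff s1 sums_mult s2)
  have "(\<lambda>i. ennreal (measure (Pk x) (A i) - pp x * measure nu (A i))) sums
      ennreal (measure (Pk x) (\<Union>i. A i) - pp x * measure nu (\<Union>i. A i))"
    using s3 minor_real[OF x] A by (subst sums_ennreal) auto
  then show "(\<Sum>i. ennreal (measure (Pk x) (A i) - pp x * measure nu (A i))) =
      ennreal (measure (Pk x) (\<Union>(range A)) - pp x * measure nu (\<Union>(range A)))"
    by (simp add: sums_iff)
qed

lemma emeasure_Q:
  assumes x: "x \<in> space M" and A: "A \<in> sets M"
  shows "emeasure (Q x) A = ennreal (measure (Pk x) A - pp x * measure nu A)"
  unfolding Q_def
  by (rule emeasure_measure_of_sigma[OF _ _ Q_ca[OF x] A])
     (auto simp: positive_def sets.sigma_algebra_axioms)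

lemma sets_Q[simp, measurable_cong]: "sets (Q x) = sets M"
  unfolding Q_def by (simp add: sets.space_closed)

lemma space_Q[simp]: "space (Q x) = space M"
  unfolding Q_def by (simp add: sets.space_closed)

lemma Q_space:
  assumes x: "x \<in> space M"
  shows "emeasure (Q x) (space M) = ennreal (1 - pp x)"
  using emeasure_Q[OF x sets.top] prob_space.prob_space[OF nu] prob_space.prob_space[OF Pk_x(1)[OF x]]
    space_nu space_Pk[OF x] by simp

lemma Q_le: assumes x: "x \<in> space M" shows "Q x \<le> Pk x"
proof -
  have "emeasure (Q x) A \<le> emeasure (Pk x) A" for A
  proof (cases "A \<in> sets M")
    case True
    then show ?thesis
      using emeasure_Q[OF x True] finite_measure.emeasure_eq_measure[OF prob_space.finite_measure[OF Pk_x(1)[OF x]]]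
        pp_ge0[of x] measure_nonneg[of nu A]
      by (simp add: ennreal_leI)
  next
    case False
    then show ?thesis by (simp add: emeasure_notin_sets)
  qed
  then show ?thesis
    using Pk_x[OF x] space_Pk[OF x] by (simp add: le_measure_iff le_fun_def)
qed

lemma Q_meas: "Q \<in> measurable M (subprob_algebra M)"
proof (rule measurable_subprob_algebra)
  fix x assume x: "x \<in> space M"
  show "subprob_space (Q x)"
    using Q_space[OF x] pp_ge0[of x] C_sub Cne
    by (intro subprob_spaceI) (auto simp: ennreal_le_1)
  show "sets (Q x) = sets M" by simp
next
  fix A assume A: "A \<in> sets M"
  have "(\<lambda>x. ennreal (measure (Pk x) A - pp x * measure nu A)) \<in> borel_measurable M"
    using Pk A CM unfolding pp_def by measurable
  then show "(\<lambda>x. emeasure (Q x) A) \<in> borel_measurable M"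
    by (rule measurable_cong[THEN iffD1, rotated]) (simp add: emeasure_Q A)
qed

lemma R_scale:
  assumes x: "x \<in> space M" and p1: "pp x < 1"
  shows "R x = scale_measure (ennreal (1 / (1 - pp x))) (Q x)"
proof -
  have eqA: "(emeasure (Pk x) A - ennreal (d0 * indicator C x) * emeasure nu A) /
        (1 - ennreal (d0 * indicator C x)) = emeasure (scale_measure (ennreal (1 / (1 - pp x))) (Q x)) A"
    if A: "A \<in> sets M" for A
  proof -
    have mP: "emeasure (Pk x) A = ennreal (measure (Pk x) A)"
      using finite_measure.emeasure_eq_measure[OF prob_space.finite_measure[OF Pk_x(1)[OF x]]] .
    have mN: "emeasure nu A = ennreal (measure nu A)"
      using finite_measure.emeasure_eq_measure[OF prob_space.finite_measure[OF nu]] .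
    have "emeasure (Pk x) A - ennreal (pp x) * emeasure nu A = ennreal (measure (Pk x) A - pp x * measure nu A)"
      unfolding mP mN using pp_ge0[of x]
      by (simp add: ennreal_mult[symmetric] ennreal_minus)
    moreover have "1 - ennreal (pp x) = ennreal (1 - pp x)"
      using pp_ge0[of x] by (simp add: ennreal_1[symmetric] ennreal_minus del: ennreal_1)
    ultimately have "(emeasure (Pk x) A - ennreal (pp x) * emeasure nu A) / (1 - ennreal (pp x))
        = ennreal ((measure (Pk x) A - pp x * measure nu A) / (1 - pp x))"
      using p1 minor_real[OF x A] by (simp add: divide_ennreal)
    also have "\<dots> = ennreal (1 / (1 - pp x)) * ennreal (measure (Pk x) A - pp x * measure nu A)"
      using p1 minor_real[OF x A] by (simp add: ennreal_mult[symmetric])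
    also have "\<dots> = emeasure (scale_measure (ennreal (1 / (1 - pp x))) (Q x)) A"
      using emeasure_Q[OF x A] by simp
    finally show ?thesis by (simp add: pp_def)
  qed
  have "R x = measure_of (space M) (sets M) (emeasure (scale_measure (ennreal (1 / (1 - pp x))) (Q x)))"
    unfolding split_residual_def
    by (rule measure_of_eq) (auto simp: sets.space_closed sets.sigma_sets_eq eqA)
  also have "\<dots> = scale_measure (ennreal (1 / (1 - pp x))) (Q x)"
    using measure_of_of_measure[of "scale_measure (ennreal (1 / (1 - pp x))) (Q x)"]
    by (simp add: space_scale_measure)
  finally show ?thesis .
qed

lemma R_Q:
  assumes x: "x \<in> space M"
  shows "ennreal (1 - pp x) * (\<integral>\<^sup>+y. h y \<partial>R x) = (\<integral>\<^sup>+y. h y \<partial>Q x)"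
proof (cases "pp x < 1")
  case True
  have "ennreal (1 - pp x) * (\<integral>\<^sup>+y. h y \<partial>R x) =
      (ennreal (1 - pp x) * ennreal (1 / (1 - pp x))) * (\<integral>\<^sup>+y. h y \<partial>Q x)"
    unfolding R_scale[OF x True] nn_integral_scale_measure_any by (simp add: mult.assoc)
  also have "ennreal (1 - pp x) * ennreal (1 / (1 - pp x)) = 1"
    using True by (simp add: ennreal_mult[symmetric])
  finally show ?thesis by simp
next
  case False
  then have p: "pp x = 1" using pp_le1[of x] by simp
  have "(\<integral>\<^sup>+y. h y \<partial>Q x) \<le> (\<integral>\<^sup>+y. top \<partial>Q x)"
    by (intro nn_integral_mono) simp
  also have "\<dots> = 0" using Q_space[OF x] p by simp
  finally show ?thesis using p by simp
qed

abbreviation SP where "SP \<equiv> split_path M Pk C d0 nu"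

lemma pp_ind: "d0 * indicator C x = pp x" by (simp add: pp_def)

lemma SP0: "SP 0 x g = g [(x,True)] * ennreal (pp x) + g [(x,False)] * ennreal (1 - pp x)"
  using pp_ge0[of x] pp_le1[of x] by (simp add: pp_ind)

lemma SPS:
  assumes x: "x \<in> space M"
  shows "SP (Suc n) x g = (\<integral>\<^sup>+x'. SP n x' (\<lambda>zs. g ((x,True)#zs)) \<partial>nu) * ennreal (pp x)
     + (\<integral>\<^sup>+x'. SP n x' (\<lambda>zs. g ((x,False)#zs)) \<partial>Q x)"
  using pp_ge0[of x] pp_le1[of x] R_Q[OF x, of "\<lambda>x'. SP n x' (\<lambda>zs. g ((x,False)#zs))"]
  by (simp add: pp_ind mult.commute)

lemma SP_zero: "SP n x (\<lambda>_. 0) = 0"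
  by (induction n arbitrary: x) (simp_all add: pp_ind)

lemma regen_at_Suc: "regen_at (Suc n) (z#zs) \<longleftrightarrow> \<not> snd z \<and> regen_at n zs"
  unfolding regen_at_def by (auto simp: less_Suc_eq_0_disj)

lemma regen_at_0: "regen_at 0 (z#zs) \<longleftrightarrow> snd z"
  unfolding regen_at_def by auto

definition nore :: "nat \<Rightarrow> ('a \<times> bool) list \<Rightarrow> bool" where
  "nore n zs \<longleftrightarrow> (\<forall>j\<le>n. \<not> snd (zs ! j))"

lemma nore_Suc: "nore (Suc n) (z#zs) \<longleftrightarrow> \<not> snd z \<and> nore n zs"
proof -
  have "nore (Suc n) (z#zs) \<longleftrightarrow> (\<forall>j<Suc (Suc n). \<not> snd ((z#zs)!j))"
    by (simp add: nore_def less_Suc_eq_le)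
  also have "\<dots> \<longleftrightarrow> \<not>snd z \<and> (\<forall>j<Suc n. \<not> snd (zs!j))" by (simp add: All_less_Suc2)
  also have "\<dots> \<longleftrightarrow> \<not> snd z \<and> nore n zs" by (simp add: nore_def less_Suc_eq_le)
  finally show ?thesis .
qed

lemma nore_0: "nore 0 (z#zs) \<longleftrightarrow> \<not> snd z"
  unfolding nore_def by auto

primrec rho where
  "rho 0 = (\<lambda>x. ennreal (pp x))"
| "rho (Suc n) = (\<lambda>x. \<integral>\<^sup>+y. rho n y \<partial>Q x)"

primrec sig where
  "sig 0 = (\<lambda>x. ennreal (1 - pp x))"
| "sig (Suc n) = (\<lambda>x. \<integral>\<^sup>+y. sig n y \<partial>Q x)"

lemma pp_meas[measurable]: "pp \<in> borel_measurable M"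
  unfolding pp_def using CM by measurable

lemma rho_meas[measurable]: "rho n \<in> borel_measurable M"
  by (induction n) (auto intro: measurable_compose[OF Q_meas nn_integral_measurable_subprob_algebra])

lemma sig_meas[measurable]: "sig n \<in> borel_measurable M"
  by (induction n) (auto intro: measurable_compose[OF Q_meas nn_integral_measurable_subprob_algebra])

lemma rho_eq: "x \<in> space M \<Longrightarrow> SP n x (\<lambda>zs. if regen_at n zs then 1 else 0) = rho n x"
proof (induction n arbitrary: x)
  case 0 then show ?case unfolding SP0 by (simp add: regen_at_0)
next
  case (Suc n)
  have "SP (Suc n) x (\<lambda>zs. if regen_at (Suc n) zs then 1 else 0) =
     (\<integral>\<^sup>+x'. SP n x' (\<lambda>zs. if regen_at n zs then 1 else 0) \<partial>Q x)"
    unfolding SPS[OF Suc.prems] by (simp add: regen_at_Suc SP_zero)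
  also have "\<dots> = (\<integral>\<^sup>+x'. rho n x' \<partial>Q x)"
    by (intro nn_integral_cong) (simp add: Suc.IH)
  finally show ?case by simp
qed

lemma sig_eq: "x \<in> space M \<Longrightarrow> SP n x (\<lambda>zs. if nore n zs then 1 else 0) = sig n x"
proof (induction n arbitrary: x)
  case 0 then show ?case unfolding SP0 by (simp add: nore_0)
next
  case (Suc n)
  have "SP (Suc n) x (\<lambda>zs. if nore (Suc n) zs then 1 else 0) =
     (\<integral>\<^sup>+x'. SP n x' (\<lambda>zs. if nore n zs then 1 else 0) \<partial>Q x)"
    unfolding SPS[OF Suc.prems] by (simp add: nore_Suc SP_zero)
  also have "\<dots> = (\<integral>\<^sup>+x'. sig n x' \<partial>Q x)"
    by (intro nn_integral_cong) (simp add: Suc.IH)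
  finally show ?case by simp
qed

lemma rho_sig: "x \<in> space M \<Longrightarrow> (\<Sum>k\<le>n. rho k x) + sig n x = 1"
proof (induction n arbitrary: x)
  case 0 then show ?case
    using pp_ge0[of x] pp_le1[of x] by (simp add: ennreal_plus[symmetric] del: ennreal_plus)
next
  case (Suc n)
  have "(\<Sum>k\<le>Suc n. rho k x) = rho 0 x + (\<Sum>k\<le>n. rho (Suc k) x)"
    by (rule sum.atMost_Suc_shift)
  then have "(\<Sum>k\<le>Suc n. rho k x) + sig (Suc n) x =
      ennreal (pp x) + ((\<Sum>k\<le>n. \<integral>\<^sup>+y. rho k y \<partial>Q x) + (\<integral>\<^sup>+y. sig n y \<partial>Q x))"
    by (simp add: add.assoc)
  also have "(\<Sum>k\<le>n. \<integral>\<^sup>+y. rho k y \<partial>Q x) = (\<integral>\<^sup>+y. (\<Sum>k\<le>n. rho k y) \<partial>Q x)"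
    by (rule nn_integral_sum[symmetric]) auto
  also have "\<dots> + (\<integral>\<^sup>+y. sig n y \<partial>Q x) = (\<integral>\<^sup>+y. (\<Sum>k\<le>n. rho k y) + sig n y \<partial>Q x)"
    by (rule nn_integral_add[symmetric]) auto
  also have "\<dots> = (\<integral>\<^sup>+y. 1 \<partial>Q x)"
    by (intro nn_integral_cong) (simp add: Suc.IH)
  also have "\<dots> = ennreal (1 - pp x)" using Q_space[OF Suc.prems] by simp
  finally show ?case
    using pp_ge0[of x] pp_le1[of x] by (simp add: ennreal_plus[symmetric] del: ennreal_plus)
qed

definition W where "W x = aW b0 d0 + V x"

lemma W_meas[measurable]: "W \<in> borel_measurable M"
  unfolding W_def using Vm by measurable

lemma kp: "0 < kap lam b0 d0" "kap lam b0 d0 < 1" "lam \<le> kap lam b0 d0"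
    "1 - d0 / 2 \<le> kap lam b0 d0" "aW b0 d0 * (1 - kap lam b0 d0) \<le> kap lam b0 d0 - lam"
    "1 \<le> aW b0 d0" "b0 \<le> d0 / 2 * aW b0 d0"
  using kap_props[OF lam b0 d0] by auto

lemma V0: "x \<in> space M \<Longrightarrow> 0 \<le> V x"
  using V1 by (meson order_trans zero_le_one)

lemma W_ge: "x \<in> space M \<Longrightarrow> 1 \<le> W x" "x \<in> space M \<Longrightarrow> V x \<le> W x"
  using V1 kp(6) by (auto simp: W_def)

lemma QV: "x \<in> space M \<Longrightarrow> (\<integral>\<^sup>+y. ennreal (V y) \<partial>Q x) \<le> ennreal (lam * V x + b0 * indicator C x)"
proof -
  assume x: "x \<in> space M"
  have "(\<integral>\<^sup>+y. ennreal (V y) \<partial>Q x) \<le> (\<integral>\<^sup>+y. ennreal (V y) \<partial>Pk x)"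
    by (rule nn_integral_mono_measure) (simp_all add: Pk_x(2)[OF x] Q_le[OF x])
  then show ?thesis using drift x by (meson order_trans)
qed

lemma QW: assumes x: "x \<in> space M"
  shows "(\<integral>\<^sup>+y. ennreal (W y) \<partial>Q x) \<le> ennreal (kap lam b0 d0 * W x)"
proof -
  let ?a = "aW b0 d0" and ?k = "kap lam b0 d0"
  have "(\<integral>\<^sup>+y. ennreal (W y) \<partial>Q x) = (\<integral>\<^sup>+y. ennreal ?a + ennreal (V y) \<partial>Q x)"
  proof (intro nn_integral_cong)
    fix y assume "y \<in> space (Q x)"
    then have "0 \<le> V y" using V0 by simp
    then show "ennreal (W y) = ennreal ?a + ennreal (V y)" using kp(6) by (simp add: W_def ennreal_plus)
  qed
  also have "\<dots> = ennreal ?a * emeasure (Q x) (space M) + (\<integral>\<^sup>+y. ennreal (V y) \<partial>Q x)"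
  proof -
    have "(\<integral>\<^sup>+y. ennreal ?a + ennreal (V y) \<partial>Q x) = (\<integral>\<^sup>+y. ennreal ?a \<partial>Q x) + (\<integral>\<^sup>+y. ennreal (V y) \<partial>Q x)"
      by (rule nn_integral_add) (use Vm in auto)
    then show ?thesis by (simp add: nn_integral_const)
  qed
  also have "\<dots> \<le> ennreal (?a * (1 - pp x)) + ennreal (lam * V x + b0 * indicator C x)"
  proof (intro add_mono)
    show "ennreal ?a * emeasure (Q x) (space M) \<le> ennreal (?a * (1 - pp x))"
      unfolding Q_space[OF x] using kp(6) pp_le1[of x] by (simp add: ennreal_mult)
  qed (rule QV[OF x])
  also have "\<dots> = ennreal (?a * (1 - pp x) + (lam * V x + b0 * indicator C x))"
  proof (rule ennreal_plus[symmetric])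
    show "0 \<le> ?a * (1 - pp x)" using kp(6) pp_le1[of x] by simp
    have "0 \<le> V x" using V0 x by simp
    then show "0 \<le> lam * V x + b0 * indicator C x" using lam b0 by simp
  qed
  also have "\<dots> \<le> ennreal (?k * W x)"
  proof (rule ennreal_leI)
    have Vx: "1 \<le> V x" using V1 x by auto
    show "?a * (1 - pp x) + (lam * V x + b0 * indicator C x) \<le> ?k * W x"
    proof (cases "x \<in> C")
      case True
      have "lam * V x \<le> ?k * V x" using kp(3) Vx by (intro mult_right_mono) auto
      moreover have "(1 - d0/2) * ?a \<le> ?k * ?a" using kp(4,6) by (intro mult_right_mono) auto
      ultimately have g: "?a*(1-d0) + (lam*V x + b0) \<le> ?k*(?a + V x)" using kp(7) by (rule ineqC)
      have "pp x = d0" "indicator C x = (1::real)" using True by (simp_all add: pp_def)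
      then show ?thesis using g by (simp add: W_def)
    next
      case False
      have "(?k - lam) * 1 \<le> (?k - lam) * V x" using kp(3) Vx by (intro mult_left_mono) auto
      then have g: "?a + lam*V x \<le> ?k*(?a + V x)" using kp(5) by (rule ineqN)
      have "pp x = 0" "indicator C x = (0::real)" using False by (simp_all add: pp_def)
      then show ?thesis using g by (simp add: W_def)
    qed
  qed
  finally show ?thesis .
qed

lemmas [measurable_cong] = sets_nu

lemma sig_le: "x \<in> space M \<Longrightarrow> sig n x \<le> ennreal (kap lam b0 d0 ^ n * W x)"
proof (induction n arbitrary: x)
  case 0 then show ?case using W_ge[OF 0] pp_ge0[of x] by (simp add: ennreal_leI)
next
  case (Suc n)
  have "sig (Suc n) x = (\<integral>\<^sup>+y. sig n y \<partial>Q x)" by simp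
  also have "\<dots> \<le> (\<integral>\<^sup>+y. ennreal (kap lam b0 d0 ^ n) * ennreal (W y) \<partial>Q x)"
  proof (intro nn_integral_mono)
    fix y assume "y \<in> space (Q x)"
    then show "sig n y \<le> ennreal (kap lam b0 d0 ^ n) * ennreal (W y)"
      using Suc.IH[of y] ennreal_mult[of "kap lam b0 d0 ^ n" "W y"] kp(1) W_ge(1)[of y] by simp
  qed
  also have "\<dots> = ennreal (kap lam b0 d0 ^ n) * (\<integral>\<^sup>+y. ennreal (W y) \<partial>Q x)"
    by (rule nn_integral_cmult) simp
  also have "\<dots> \<le> ennreal (kap lam b0 d0 ^ n) * ennreal (kap lam b0 d0 * W x)"
    by (intro mult_left_mono QW Suc.prems) simp
  also have "\<dots> = ennreal (kap lam b0 d0 ^ Suc n * W x)"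
  proof -
    have "0 \<le> kap lam b0 d0 ^ n" "0 \<le> kap lam b0 d0 * W x"
      using kp(1) W_ge(1)[OF Suc.prems] by simp_all
    then show ?thesis by (simp add: ennreal_mult[symmetric] algebra_simps)
  qed
  finally show ?case .
qed

lemma nuV: "(\<integral>\<^sup>+y. ennreal (V y) \<partial>nu) \<le> ennreal ((lam * Vs + b0) / d0)"
proof -
  obtain x0 where x0: "x0 \<in> C" using Cne by blast
  then have xs: "x0 \<in> space M" using C_sub by blast
  have Vs1: "1 \<le> Vs" using Vs x0 V1 xs by force
  have le: "scale_measure (ennreal d0) nu \<le> Pk x0"
  proof -
    have "emeasure (scale_measure (ennreal d0) nu) A \<le> emeasure (Pk x0) A" for A
    proof (cases "A \<in> sets M")
      case True then show ?thesis using minor x0 by simp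
    next
      case False then show ?thesis using sets_nu by (simp add: emeasure_notin_sets)
    qed
    then show ?thesis
      using Pk_x[OF xs] space_Pk[OF xs] space_nu sets_nu
      by (simp add: le_measure_iff le_fun_def space_scale_measure)
  qed
  have "ennreal d0 * (\<integral>\<^sup>+y. ennreal (V y) \<partial>nu) = (\<integral>\<^sup>+y. ennreal (V y) \<partial>scale_measure (ennreal d0) nu)"
    by (simp add: nn_integral_scale_measure_any)
  also have "\<dots> \<le> (\<integral>\<^sup>+y. ennreal (V y) \<partial>Pk x0)"
    by (rule nn_integral_mono_measure[OF _ le]) (simp add: Pk_x(2)[OF xs] sets_nu)
  also have "\<dots> \<le> ennreal (lam * V x0 + b0)"
    using drift xs x0 by auto
  also have "\<dots> \<le> ennreal (lam * Vs + b0)"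
    using Vs x0 lam by (intro ennreal_leI) (simp add: mult_left_mono)
  finally have h: "ennreal d0 * (\<integral>\<^sup>+y. ennreal (V y) \<partial>nu) \<le> ennreal (lam * Vs + b0)" .
  have "(\<integral>\<^sup>+y. ennreal (V y) \<partial>nu) = ennreal (1/d0) * (ennreal d0 * (\<integral>\<^sup>+y. ennreal (V y) \<partial>nu))"
    using d0 by (simp add: mult.assoc[symmetric] ennreal_mult[symmetric])
  also have "\<dots> \<le> ennreal (1/d0) * ennreal (lam * Vs + b0)"
    by (intro mult_left_mono h) simp
  also have "\<dots> = ennreal ((lam * Vs + b0) / d0)"
  proof -
    have "0 \<le> lam * Vs + b0" using Vs1 lam b0 by simp
    then show ?thesis using d0 by (simp add: ennreal_mult[symmetric])
  qed
  finally show ?thesis .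
qed

definition WB where "WB = aW b0 d0 + (lam * Vs + b0) / d0"

lemma nuW: "(\<integral>\<^sup>+y. ennreal (W y) \<partial>nu) \<le> ennreal WB"
proof -
  have "(\<integral>\<^sup>+y. ennreal (W y) \<partial>nu) = (\<integral>\<^sup>+y. ennreal (aW b0 d0) + ennreal (V y) \<partial>nu)"
  proof (intro nn_integral_cong)
    fix y assume "y \<in> space nu"
    then have "0 \<le> V y" using V0 space_nu by simp
    then show "ennreal (W y) = ennreal (aW b0 d0) + ennreal (V y)" using kp(6) by (simp add: W_def ennreal_plus)
  qed
  also have "\<dots> = (\<integral>\<^sup>+y. ennreal (aW b0 d0) \<partial>nu) + (\<integral>\<^sup>+y. ennreal (V y) \<partial>nu)"
    by (rule nn_integral_add) (use Vm in auto)
  also have "\<dots> = ennreal (aW b0 d0) + (\<integral>\<^sup>+y. ennreal (V y) \<partial>nu)"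
    using prob_space.emeasure_space_1[OF nu] by (simp add: nn_integral_const)
  also have "\<dots> \<le> ennreal (aW b0 d0) + ennreal ((lam * Vs + b0) / d0)"
    by (intro add_left_mono nuV)
  also have "\<dots> = ennreal WB"
  proof -
    obtain x0 where x0: "x0 \<in> C" using Cne by blast
    then have "1 \<le> Vs" using Vs C_sub V1 by force
    then have "0 \<le> (lam * Vs + b0) / d0" using lam b0 d0 by simp
    then show ?thesis using kp(6) by (simp add: WB_def ennreal_plus)
  qed
  finally show ?thesis .
qed

lemma WB_pos: "0 < WB"
proof -
  obtain x0 where x0: "x0 \<in> C" using Cne by blast
  then have "1 \<le> Vs" using Vs C_sub V1 by force
  then have "0 \<le> (lam * Vs + b0) / d0" using lam b0 d0 by simp
  then show ?thesis using kp(6) by (simp add: WB_def)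
qed

lemma goal1:
  "(\<Sum>n. split_exp M Pk C d0 nu n (\<lambda>zs. if regen_at n zs then 1 else 0)) = 1"
proof -
  have eq: "split_exp M Pk C d0 nu n (\<lambda>zs. if regen_at n zs then 1 else 0) = (\<integral>\<^sup>+x. rho n x \<partial>nu)" for n
    unfolding split_exp_def by (intro nn_integral_cong) (simp add: rho_eq space_nu)
  let ?F = "\<lambda>x. \<Sum>n. rho n x"
  have sumF: "(\<Sum>n. (\<integral>\<^sup>+x. rho n x \<partial>nu)) = (\<integral>\<^sup>+x. ?F x \<partial>nu)"
    by (rule nn_integral_suminf[symmetric]) simp
  have part: "(\<Sum>k\<le>n. rho k x) \<le> 1" if "x \<in> space M" for x n
    using rho_sig[OF that, of n] by (metis le_iff_add)
  have up: "(\<integral>\<^sup>+x. ?F x \<partial>nu) \<le> 1"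
  proof -
    have "(\<integral>\<^sup>+x. ?F x \<partial>nu) \<le> (\<integral>\<^sup>+x. 1 \<partial>nu)"
    proof (intro nn_integral_mono)
      fix x assume x: "x \<in> space nu"
      show "?F x \<le> 1"
      proof (rule suminf_le_const[OF summableI])
        fix n
        have "(\<Sum>k<n. rho k x) \<le> (\<Sum>k\<le>n. rho k x)" by (intro sum_mono2) auto
        also have "\<dots> \<le> 1" using part x space_nu by simp
        finally show "(\<Sum>k<n. rho k x) \<le> 1" .
      qed
    qed
    also have "\<dots> = 1" using prob_space.emeasure_space_1[OF nu] by simp
    finally show ?thesis .
  qed
  have low: "1 \<le> (\<integral>\<^sup>+x. ?F x \<partial>nu)"
  proof (rule ennreal_le_epsilon)
    fix e :: real assume e: "0 < e"
    obtain n where n: "kap lam b0 d0 ^ n < e / WB"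
      using real_arch_pow_inv[of "e / WB" "kap lam b0 d0"] e WB_pos kp(2) by auto
    have "1 = (\<integral>\<^sup>+x. 1 \<partial>nu)" using prob_space.emeasure_space_1[OF nu] by simp
    also have "\<dots> = (\<integral>\<^sup>+x. (\<Sum>k\<le>n. rho k x) + sig n x \<partial>nu)"
      by (intro nn_integral_cong) (simp add: rho_sig space_nu)
    also have "\<dots> = (\<integral>\<^sup>+x. (\<Sum>k\<le>n. rho k x) \<partial>nu) + (\<integral>\<^sup>+x. sig n x \<partial>nu)"
      by (rule nn_integral_add) auto
    also have "\<dots> \<le> (\<integral>\<^sup>+x. ?F x \<partial>nu) + ennreal e"
    proof (intro add_mono)
      show "(\<integral>\<^sup>+x. (\<Sum>k\<le>n. rho k x) \<partial>nu) \<le> (\<integral>\<^sup>+x. ?F x \<partial>nu)"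
        by (intro nn_integral_mono sum_le_suminf) auto
      have "(\<integral>\<^sup>+x. sig n x \<partial>nu) \<le> (\<integral>\<^sup>+x. ennreal (kap lam b0 d0 ^ n) * ennreal (W x) \<partial>nu)"
      proof (intro nn_integral_mono)
        fix x assume "x \<in> space nu"
        then show "sig n x \<le> ennreal (kap lam b0 d0 ^ n) * ennreal (W x)"
          using sig_le[of x n] ennreal_mult[of "kap lam b0 d0 ^ n" "W x"] kp(1) W_ge(1)[of x] space_nu
          by simp
      qed
      also have "\<dots> = ennreal (kap lam b0 d0 ^ n) * (\<integral>\<^sup>+x. ennreal (W x) \<partial>nu)"
        by (rule nn_integral_cmult) simp
      also have "\<dots> \<le> ennreal (kap lam b0 d0 ^ n) * ennreal WB"
        by (intro mult_left_mono nuW) simp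
      also have "\<dots> = ennreal (kap lam b0 d0 ^ n * WB)"
        using kp(1) WB_pos by (simp add: ennreal_mult)
      also have "\<dots> \<le> ennreal e"
        using n WB_pos by (intro ennreal_leI) (simp add: pos_less_divide_eq less_imp_le)
      finally show "(\<integral>\<^sup>+x. sig n x \<partial>nu) \<le> ennreal e" .
    qed
    finally show "1 \<le> (\<integral>\<^sup>+x. ?F x \<partial>nu) + ennreal e" .
  qed
  show ?thesis unfolding eq sumF using up low by (rule antisym)
qed

lemma space_R: "space (R x) = space M"
  unfolding split_residual_def by (simp add: sets.space_closed)

lemma SP_mono:
  assumes "x \<in> space M"
    and "\<And>zs. length zs = Suc n \<Longrightarrow> (\<forall>z\<in>set zs. fst z \<in> space M) \<Longrightarrow> g zs \<le> g' zs"
  shows "SP n x g \<le> SP n x g'"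
  using assms
proof (induction n arbitrary: x g g')
  case 0
  show ?case unfolding SP0
    using "0.prems" by (intro add_mono mult_right_mono) auto
next
  case (Suc n)
  show ?case
    unfolding split_path.simps
    apply (intro nn_integral_mono)
    apply (rule Suc.IH)
     apply (auto simp: space_nu space_R split: if_splits)[1]
    apply (rule Suc.prems(2))
    using Suc.prems(1) apply auto
    done
qed

definition GJ :: "real \<Rightarrow> real \<Rightarrow> real \<Rightarrow> real \<Rightarrow> nat \<Rightarrow> ('a \<times> bool) list \<Rightarrow> ennreal" where
  "GJ c1 th s t n zs = (if regen_at n zs then ennreal (s + c1 * (\<Sum>j\<le>n. V (fst (zs ! j))) + t * th ^ n) else 0)"

lemma GJ_True: "GJ c1 th s t (Suc n) ((x,True)#zs) = 0"
  by (simp add: GJ_def regen_at_Suc)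

lemma GJ_False: "GJ c1 th s t (Suc n) ((x,False)#zs) = GJ c1 th (s + c1 * V x) (t * th) n zs"
proof -
  have "(\<Sum>j\<le>Suc n. V (fst (((x,False)#zs) ! j))) = V x + (\<Sum>j\<le>n. V (fst (zs ! j)))"
    unfolding sum.atMost_Suc_shift by simp
  then show ?thesis by (simp add: GJ_def regen_at_Suc algebra_simps)
qed

lemma GJ0: "GJ c1 th s t 0 [(x,True)] = ennreal (s + c1 * V x + t)" "GJ c1 th s t 0 [(x,False)] = 0"
  by (simp_all add: GJ_def regen_at_def)

lemma SP_GJ_Suc:
  assumes x: "x \<in> space M"
  shows "SP (Suc n) x (GJ c1 th s t (Suc n)) = (\<integral>\<^sup>+x'. SP n x' (GJ c1 th (s + c1 * V x) (t * th) n) \<partial>Q x)"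
  unfolding SPS[OF x] GJ_True GJ_False SP_zero by simp

lemma goal2_bound:
  assumes c1: "0 \<le> c1" and th: "0 < th" "th * kap lam b0 d0 < 1"
  shows "x \<in> space M \<Longrightarrow> 0 \<le> s \<Longrightarrow> 0 \<le> t \<Longrightarrow>
    (\<Sum>n\<le>N. SP n x (GJ c1 th s t n)) \<le>
      ennreal (s + (c1 * (1 / (1 - kap lam b0 d0)) + t * (1 / (1 - th * kap lam b0 d0))) * W x)"
proof (induction N arbitrary: x s t)
  let ?k = "kap lam b0 d0"
  let ?u = "1 / (1 - ?k)" and ?v = "1 / (1 - th * ?k)"
  have u1: "1 \<le> ?u" using kp(1,2) by simp
  have v1: "1 \<le> ?v" using th kp(1) by (simp add: mult_pos_pos)
  have uk: "?u * (1 - ?k) = 1" using kp(2) by simp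
  have vk: "?v * (1 - th * ?k) = 1" using th by simp
  {
    case 0
    have "SP 0 x (GJ c1 th s t 0) = ennreal (s + c1 * V x + t) * ennreal (pp x)"
      unfolding SP0 GJ0 by simp
    also have "\<dots> \<le> ennreal (s + c1 * V x + t) * 1"
      using pp_le1[of x] by (intro mult_left_mono) (auto simp: ennreal_le_1)
    also have "\<dots> \<le> ennreal (s + (c1 * ?u + t * ?v) * W x)"
    proof -
      have "c1 * V x \<le> c1 * ?u * W x"
      proof -
        have "1 * W x \<le> ?u * W x"
          using W_ge[OF "0.prems"(1)] u1 by (intro mult_right_mono) auto
        then have "V x \<le> ?u * W x" using W_ge[OF "0.prems"(1)] by simp
        then show ?thesis using c1 by (metis mult_left_mono mult.assoc)
      qed
      moreover have "t \<le> t * ?v * W x"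
      proof -
        have "1 * 1 \<le> ?v * W x" using W_ge[OF "0.prems"(1)] v1 th by (intro mult_mono) auto
        then have "1 \<le> ?v * W x" by simp
        then have "t * 1 \<le> t * (?v * W x)" using "0.prems"(3) by (rule mult_left_mono)
        then show ?thesis by (simp add: mult.assoc)
      qed
      ultimately have "s + c1 * V x + t \<le> s + (c1 * ?u + t * ?v) * W x"
        by (simp add: algebra_simps)
      then show ?thesis by (simp add: ennreal_leI)
    qed
    finally show ?case by simp
  }
  {
    case (Suc N)
    note x = Suc.prems(1)
    let ?s' = "s + c1 * V x" and ?t' = "t * th"
    have s': "0 \<le> ?s'" using Suc.prems c1 V0[OF x] by simp
    have t': "0 \<le> ?t'" using Suc.prems th by simp
    have "(\<Sum>n\<le>Suc N. SP n x (GJ c1 th s t n)) = SP 0 x (GJ c1 th s t 0) + (\<Sum>n\<le>N. SP (Suc n) x (GJ c1 th s t (Suc n)))"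
      by (rule sum.atMost_Suc_shift)
    also have "(\<Sum>n\<le>N. SP (Suc n) x (GJ c1 th s t (Suc n))) = (\<Sum>n\<le>N. \<integral>\<^sup>+x'. SP n x' (GJ c1 th ?s' ?t' n) \<partial>Q x)"
      by (rule sum.cong[OF refl]) (rule SP_GJ_Suc[OF x])
    also have "\<dots> \<le> (\<integral>\<^sup>+x'. (\<Sum>n\<le>N. SP n x' (GJ c1 th ?s' ?t' n)) \<partial>Q x)"
      by (rule nn_integral_superadd_sum) simp
    also have "\<dots> \<le> (\<integral>\<^sup>+x'. ennreal ?s' + ennreal (c1 * ?u + ?t' * ?v) * ennreal (W x') \<partial>Q x)"
    proof (intro nn_integral_mono)
      fix y assume "y \<in> space (Q x)"
      then have y: "y \<in> space M" by simp
      have uu: "0 \<le> ?u" using u1 by linarith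
      have vv: "0 \<le> ?v" using v1 by linarith
      have "0 \<le> c1 * ?u + ?t' * ?v"
        using mult_nonneg_nonneg[OF c1 uu] mult_nonneg_nonneg[OF t' vv] by linarith
      then have "ennreal (?s' + (c1 * ?u + ?t' * ?v) * W y) = ennreal ?s' + ennreal (c1 * ?u + ?t' * ?v) * ennreal (W y)"
        using s' W_ge(1)[OF y] by (simp add: ennreal_plus ennreal_mult)
      then show "(\<Sum>n\<le>N. SP n y (GJ c1 th ?s' ?t' n)) \<le> ennreal ?s' + ennreal (c1 * ?u + ?t' * ?v) * ennreal (W y)"
        using Suc.IH[OF y s' t'] by simp
    qed
    also have "\<dots> = ennreal ?s' * emeasure (Q x) (space M) + ennreal (c1 * ?u + ?t' * ?v) * (\<integral>\<^sup>+x'. ennreal (W x') \<partial>Q x)"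
      by (subst nn_integral_add) (simp_all add: nn_integral_cmult nn_integral_const)
    also have "\<dots> \<le> ennreal (?s' * (1 - pp x)) + ennreal (c1 * ?u + ?t' * ?v) * ennreal (?k * W x)"
      unfolding Q_space[OF x] using s' pp_le1[of x]
      by (intro add_mono mult_left_mono QW[OF x]) (simp_all add: ennreal_mult)
    finally have h: "(\<Sum>n\<le>Suc N. SP n x (GJ c1 th s t n)) \<le> SP 0 x (GJ c1 th s t 0) +
        (ennreal (?s' * (1 - pp x)) + ennreal (c1 * ?u + ?t' * ?v) * ennreal (?k * W x))"
      by (simp add: add_left_mono)
    have e1: "SP 0 x (GJ c1 th s t 0) = ennreal ((s + c1 * V x + t) * pp x)"
      unfolding SP0 GJ0 using Suc.prems c1 V0[OF x] pp_ge0[of x] by (simp add: ennreal_mult)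
    have uu: "0 \<le> ?u" using u1 by linarith
    have vv: "0 \<le> ?v" using v1 by linarith
    have B0: "0 \<le> (c1 * ?u + ?t' * ?v) * (?k * W x)"
      using mult_nonneg_nonneg[OF c1 uu] mult_nonneg_nonneg[OF t' vv] kp(1) W_ge(1)[OF x]
      by (intro mult_nonneg_nonneg) auto
    have e2: "ennreal (c1 * ?u + ?t' * ?v) * ennreal (?k * W x) = ennreal ((c1 * ?u + ?t' * ?v) * (?k * W x))"
    proof (rule ennreal_mult[symmetric])
      show "0 \<le> c1 * ?u + ?t' * ?v"
        using mult_nonneg_nonneg[OF c1 uu] mult_nonneg_nonneg[OF t' vv] by linarith
      show "0 \<le> ?k * W x" using kp(1) W_ge(1)[OF x] by simp
    qed
    have A0: "0 \<le> (s + c1 * V x + t) * pp x"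
      using Suc.prems c1 V0[OF x] pp_ge0[of x] by simp
    have S0: "0 \<le> ?s' * (1 - pp x)" using s' pp_le1[of x] by simp
    have e3: "ennreal ((s + c1 * V x + t) * pp x) + (ennreal (?s' * (1 - pp x)) + ennreal ((c1 * ?u + ?t' * ?v) * (?k * W x)))
       = ennreal ((s + c1 * V x + t) * pp x + ?s' * (1 - pp x) + (c1 * ?u + ?t' * ?v) * (?k * W x))"
      using A0 S0 B0 by (simp add: ennreal_plus[symmetric] add.assoc del: ennreal_plus)
    have h2: "(\<Sum>n\<le>Suc N. SP n x (GJ c1 th s t n)) \<le>
        ennreal ((s + c1 * V x + t) * pp x + ?s' * (1 - pp x) + (c1 * ?u + ?t' * ?v) * (?k * W x))"
      using h unfolding e1 e2 e3 .
    also have "\<dots> \<le> ennreal (s + (c1 * ?u + t * ?v) * W x)"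
    proof (rule ennreal_leI)
      have "(s + c1 * V x + t) * pp x + (s + c1 * V x) * (1 - pp x) + (c1 * ?u + t * th * ?v) * (?k * W x)
          \<le> s + (c1 * ?u + t * ?v) * W x"
        by (rule ineqStep[OF uk vk c1 Suc.prems(3) W_ge(2)[OF x]])
           (use pp_le1[of x] W_ge(1)[OF x] in linarith)
      then show "(s + c1 * V x + t) * pp x + ?s' * (1 - pp x) + (c1 * ?u + ?t' * ?v) * (?k * W x)
          \<le> s + (c1 * ?u + t * ?v) * W x" by simp
    qed
    finally show ?case .
  }
qed

lemma goal2:
  fixes f :: "'a \<Rightarrow> real" and pw c1 th C' :: real
  assumes c1: "0 \<le> c1" and th: "0 < th" "th * kap lam b0 d0 < 1" and C': "0 \<le> C'"
    and hyp: "\<And>n xs. length xs = Suc n \<Longrightarrow> set xs \<subseteq> space M \<Longrightarrow>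
       \<bar>\<Sum>j\<le>n. f (xs ! j)\<bar> powr pw \<le> c1 * (\<Sum>j\<le>n. V (xs ! j)) + C' * th ^ n"
  shows "(\<Sum>n. split_exp M Pk C d0 nu n (\<lambda>zs. if regen_at n zs
            then ennreal (\<bar>\<Sum>j\<le>n. f (fst (zs ! j))\<bar> powr pw) else 0))
     \<le> ennreal ((c1 * (1 / (1 - kap lam b0 d0)) + C' * (1 / (1 - th * kap lam b0 d0))) * WB)"
proof -
  let ?k = "kap lam b0 d0"
  let ?u = "1 / (1 - ?k)" and ?v = "1 / (1 - th * ?k)"
  let ?B = "c1 * ?u + C' * ?v"
  let ?g = "\<lambda>n zs. if regen_at n zs then ennreal (\<bar>\<Sum>j\<le>n. f (fst (zs ! j))\<bar> powr pw) else 0"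
  have uu: "0 \<le> ?u" using kp(2) by simp
  have vv: "0 \<le> ?v" using th by simp
  have B0: "0 \<le> ?B" using mult_nonneg_nonneg[OF c1 uu] mult_nonneg_nonneg[OF C' vv] by linarith
  have tm: "split_exp M Pk C d0 nu n (?g n) \<le> (\<integral>\<^sup>+x. SP n x (GJ c1 th 0 C' n) \<partial>nu)" for n
    unfolding split_exp_def
  proof (intro nn_integral_mono SP_mono)
    fix x assume "x \<in> space nu" then show "x \<in> space M" by (simp add: space_nu)
  next
    fix x and zs :: "('a \<times> bool) list" assume len: "length zs = Suc n" and sp: "\<forall>z\<in>set zs. fst z \<in> space M"
    show "?g n zs \<le> GJ c1 th 0 C' n zs"
    proof (cases "regen_at n zs")
      case True
      have eqs: "(\<Sum>j\<le>n. f (map fst zs ! j)) = (\<Sum>j\<le>n. f (fst (zs ! j)))"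
        "(\<Sum>j\<le>n. V (map fst zs ! j)) = (\<Sum>j\<le>n. V (fst (zs ! j)))"
        using len by (auto intro!: sum.cong simp: nth_map)
      have "\<bar>\<Sum>j\<le>n. f (fst (zs ! j))\<bar> powr pw \<le> 0 + c1 * (\<Sum>j\<le>n. V (fst (zs ! j))) + C' * th ^ n"
        using hyp[of "map fst zs" n] len sp unfolding eqs by auto
      then show ?thesis using True by (simp add: GJ_def ennreal_leI)
    qed simp
  qed
  show ?thesis
  proof (rule suminf_le_const[OF summableI])
    fix N
    have "(\<Sum>n<N. split_exp M Pk C d0 nu n (?g n)) \<le> (\<Sum>n<N. \<integral>\<^sup>+x. SP n x (GJ c1 th 0 C' n) \<partial>nu)"
      by (intro sum_mono tm)
    also have "\<dots> \<le> (\<integral>\<^sup>+x. (\<Sum>n<N. SP n x (GJ c1 th 0 C' n)) \<partial>nu)"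
      by (rule nn_integral_superadd_sum) simp
    also have "\<dots> \<le> (\<integral>\<^sup>+x. ennreal ?B * ennreal (W x) \<partial>nu)"
    proof (intro nn_integral_mono)
      fix x assume "x \<in> space nu"
      then have x: "x \<in> space M" by (simp add: space_nu)
      have "(\<Sum>n<N. SP n x (GJ c1 th 0 C' n)) \<le> (\<Sum>n\<le>N. SP n x (GJ c1 th 0 C' n))"
        by (intro sum_mono2) auto
      also have "\<dots> \<le> ennreal (0 + ?B * W x)"
        using goal2_bound[OF c1 th x, of 0 C' N] C' by simp
      also have "\<dots> = ennreal ?B * ennreal (W x)"
        using B0 W_ge(1)[OF x] by (simp add: ennreal_mult)
      finally show "(\<Sum>n<N. SP n x (GJ c1 th 0 C' n)) \<le> ennreal ?B * ennreal (W x)" .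
    qed
    also have "\<dots> = ennreal ?B * (\<integral>\<^sup>+x. ennreal (W x) \<partial>nu)"
      by (rule nn_integral_cmult) simp
    also have "\<dots> \<le> ennreal ?B * ennreal WB"
      by (intro mult_left_mono nuW) simp
    also have "\<dots> = ennreal (?B * WB)"
      using B0 WB_pos by (simp add: ennreal_mult)
    finally show "(\<Sum>n<N. split_exp M Pk C d0 nu n (?g n)) \<le> ennreal (?B * WB)" .
  qed
qed

end

lemma young_powr:
  fixes a N pw r :: real
  assumes a: "1 \<le> a" and N: "1 \<le> N" and r: "0 < r" "r < 1" and pw: "0 \<le> pw"
  shows "N powr pw * a powr r \<le> a + N powr (pw * (r / (1 - r) + 1))"
proof -
  define k where "k = r / (1 - r)"
  have k: "0 < k" using r by (simp add: k_def)
  have rk: "r / k = 1 - r" using r by (simp add: k_def)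
  have pos: "0 < N powr pw" "0 < a powr r" "0 < N powr (pw * k)" using a N by auto
  show ?thesis
  proof (cases "a powr r \<le> N powr (pw * k)")
    case True
    have "N powr pw * a powr r \<le> N powr pw * N powr (pw * k)"
      using True pos by (intro mult_left_mono) auto
    also have "\<dots> = N powr (pw * (k + 1))" using N by (simp add: powr_add[symmetric] algebra_simps)
    also have "\<dots> \<le> a + N powr (pw * (k + 1))" using a by simp
    finally show ?thesis by (simp add: k_def)
  next
    case False
    have "N powr pw = (N powr (pw * k)) powr (1 / k)" using k N by (simp add: powr_powr)
    also have "\<dots> \<le> (a powr r) powr (1 / k)"
      using False k pos by (intro powr_mono2) auto
    also have "\<dots> = a powr (1 - r)" using rk by (simp add: powr_powr)
    finally have "N powr pw * a powr r \<le> a powr (1 - r) * a powr r"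
      using pos by (intro mult_right_mono) auto
    also have "\<dots> = a" using a by (simp add: powr_add[symmetric])
    finally show ?thesis by (smt (verit) powr_ge_zero)
  qed
qed

lemma pointwise_bound:
  fixes f V :: "'a \<Rightarrow> real" and S :: "'a set"
  assumes V1: "\<forall>x\<in>S. 1 \<le> V x" and fb: "\<forall>x\<in>S. \<bar>f x\<bar> \<le> K * V x powr e"
    and K: "0 \<le> K" and pw: "0 \<le> pw" and r: "0 < r" "r < 1" "e * pw \<le> r"
    and C0: "\<forall>n. real (Suc n) powr (pw * (r / (1 - r) + 1)) \<le> C0 * th ^ n"
    and len: "length xs = Suc n" and xs: "set xs \<subseteq> S"
  shows "\<bar>\<Sum>j\<le>n. f (xs ! j)\<bar> powr pw \<le> K powr pw * (\<Sum>j\<le>n. V (xs ! j)) + (K powr pw * C0) * th ^ n"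
proof -
  let ?N = "real (Suc n)"
  let ?a = "\<lambda>j. \<bar>f (xs ! j)\<bar>"
  define Mx where "Mx = Max (?a ` {..n})"
  have inS: "xs ! j \<in> S" if "j \<le> n" for j using that len xs by auto
  have "Mx \<in> ?a ` {..n}" unfolding Mx_def by (rule Max_in) auto
  then obtain j0 where j0: "j0 \<le> n" "?a j0 = Mx" by auto
  have Mxge: "?a j \<le> Mx" if "j \<le> n" for j unfolding Mx_def using that by (intro Max_ge) auto
  have "\<bar>\<Sum>j\<le>n. f (xs ! j)\<bar> \<le> (\<Sum>j\<le>n. ?a j)" by (rule sum_abs)
  also have "\<dots> \<le> (\<Sum>j\<le>n. Mx)" using Mxge by (intro sum_mono) auto
  also have "\<dots> = ?N * Mx" by simp
  finally have s1: "\<bar>\<Sum>j\<le>n. f (xs ! j)\<bar> \<le> ?N * Mx" .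
  have Mx0: "0 \<le> Mx" using j0 by (metis abs_ge_zero)
  have V1': "1 \<le> V (xs ! j0)" using V1 inS[OF j0(1)] by auto
  have "\<bar>\<Sum>j\<le>n. f (xs ! j)\<bar> powr pw \<le> (?N * Mx) powr pw"
    using s1 pw by (intro powr_mono2) auto
  also have "\<dots> = ?N powr pw * Mx powr pw" using Mx0 by (simp add: powr_mult)
  also have "Mx powr pw \<le> K powr pw * V (xs ! j0) powr r"
  proof -
    have "Mx powr pw \<le> (K * V (xs ! j0) powr e) powr pw"
      using fb inS[OF j0(1)] j0(2) pw by (intro powr_mono2) auto
    also have "\<dots> = K powr pw * V (xs ! j0) powr (e * pw)"
      using K V1' by (simp add: powr_mult powr_powr)
    also have "\<dots> \<le> K powr pw * V (xs ! j0) powr r"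
      using V1' r by (intro mult_left_mono powr_mono) auto
    finally show ?thesis .
  qed
  then have "?N powr pw * Mx powr pw \<le> ?N powr pw * (K powr pw * V (xs ! j0) powr r)"
    by (intro mult_left_mono) auto
  also have "\<dots> = K powr pw * (?N powr pw * V (xs ! j0) powr r)" by (simp add: algebra_simps)
  also have "\<dots> \<le> K powr pw * (V (xs ! j0) + ?N powr (pw * (r / (1 - r) + 1)))"
    using young_powr[OF V1' _ r(1,2) pw, of ?N] by (intro mult_left_mono) auto
  also have "\<dots> \<le> K powr pw * ((\<Sum>j\<le>n. V (xs ! j)) + C0 * th ^ n)"
  proof (intro mult_left_mono add_mono)
    show "V (xs ! j0) \<le> (\<Sum>j\<le>n. V (xs ! j))"
      using j0(1) V1 inS by (intro member_le_sum) (auto intro: order_trans[OF zero_le_one])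
    show "?N powr (pw * (r / (1 - r) + 1)) \<le> C0 * th ^ n" using C0 by blast
  qed auto
  also have "\<dots> = K powr pw * (\<Sum>j\<le>n. V (xs ! j)) + (K powr pw * C0) * th ^ n"
    by (simp add: algebra_simps)
  finally show ?thesis .
qed

lemma poly_geo_bound:
  fixes th m :: real
  assumes "1 < th"
  shows "\<exists>C0>0. \<forall>n. real (Suc n) powr m \<le> C0 * th ^ n"
proof -
  have lim: "((\<lambda>n. (real n + 1) powr m / th ^ n) \<longlongrightarrow> 0) sequentially"
    using assms by real_asymp
  then have "Bseq (\<lambda>n. (real n + 1) powr m / th ^ n)"
    by (intro convergent_imp_Bseq) (auto simp: convergent_def)
  then obtain B where B: "B > 0" "\<And>n. norm ((real n + 1) powr m / th ^ n) \<le> B"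
    by (auto simp: Bseq_def)
  have "real (Suc n) powr m \<le> B * th ^ n" for n
  proof -
    have tp: "0 < th ^ n" using assms by simp
    have "\<bar>th ^ n\<bar> = th ^ n" using tp by simp
    then have "(real n + 1) powr m / th ^ n \<le> B" using B(2)[of n] by simp
    then show ?thesis using tp by (simp add: divide_le_eq add.commute)
  qed
  then show ?thesis using B(1) by blast
qed

theorem mainTheorem2:
  fixes M :: "'a measure" and \<Gamma> :: "'g set" and P :: "'g \<Rightarrow> 'a \<Rightarrow> 'a measure"
    and \<pi> \<nu> :: "'a measure" and C :: "'a set" and \<delta>0 :: real
    and V :: "'a \<Rightarrow> real" and lam b :: real
  assumes A: "assumption_A M \<Gamma> P \<pi> C \<nu> \<delta>0"
    and GD: "drift_GD M \<Gamma> P C V lam b"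
    and VC: "bdd_above (V ` C)"
  shows "\<forall>f :: 'a \<Rightarrow> real. f \<in> borel_measurable M \<and>
           (\<exists>\<delta>>0. W_norm_finite M (\<lambda>x. V x powr (1/2 - \<delta>)) f)
           \<longrightarrow> assumption_L M \<Gamma> P C \<delta>0 \<nu> f"
proof (intro allI impI)
  fix f :: "'a \<Rightarrow> real"
  assume "f \<in> borel_measurable M \<and> (\<exists>\<delta>>0. W_norm_finite M (\<lambda>x. V x powr (1/2 - \<delta>)) f)"
  then obtain \<delta> K where dl: "0 < \<delta>" and Kf: "\<forall>x\<in>space M. \<bar>f x\<bar> \<le> K * V x powr (1/2 - \<delta>)"
    by (auto simp: W_norm_finite_def)
  have Pm: "\<forall>\<gamma>\<in>\<Gamma>. P \<gamma> \<in> measurable M (prob_algebra M)"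
    using A by (auto simp: assumption_A_def markov_kernel_def)
  have CM: "C \<in> sets M" and piC: "emeasure \<pi> C > 0" and nu: "prob_space \<nu>" and snu: "sets \<nu> = sets M"
    and d0: "0 < \<delta>0"
    and minor: "\<forall>\<gamma>\<in>\<Gamma>. \<forall>x\<in>C. \<forall>A\<in>sets M. ennreal \<delta>0 * emeasure \<nu> A \<le> emeasure (P \<gamma> x) A"
    using A by (auto simp: assumption_A_def)
  have Cne: "C \<noteq> {}" using piC by auto
  have Vm: "V \<in> borel_measurable M" and V1: "\<forall>x\<in>space M. 1 \<le> V x" and lam: "0 < lam" "lam < 1"
    and drift0: "\<forall>\<gamma>\<in>\<Gamma>. \<forall>x\<in>space M.
        (\<integral>\<^sup>+ y. ennreal (V y) \<partial>(P \<gamma> x)) \<le> ennreal (lam * V x + b * indicator C x)"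
    using GD by (auto simp: drift_GD_def)
  define b0 where "b0 = max b 0"
  have b0: "0 \<le> b0" by (simp add: b0_def)
  have drift: "\<forall>x\<in>space M. (\<integral>\<^sup>+ y. ennreal (V y) \<partial>(P \<gamma> x)) \<le> ennreal (lam * V x + b0 * indicator C x)"
    if "\<gamma> \<in> \<Gamma>" for \<gamma>
  proof
    fix x assume x: "x \<in> space M"
    have "b * indicator C x \<le> b0 * indicator C x"
      by (auto simp: b0_def indicator_def)
    then have "ennreal (lam * V x + b * indicator C x) \<le> ennreal (lam * V x + b0 * indicator C x)"
      by (intro ennreal_leI) simp
    then show "(\<integral>\<^sup>+ y. ennreal (V y) \<partial>(P \<gamma> x)) \<le> ennreal (lam * V x + b0 * indicator C x)"
      using drift0 that x by (meson order_trans)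
  qed
  obtain Vs where Vs: "\<forall>x\<in>C. V x \<le> Vs" using VC by (auto simp: bdd_above_def)
  have kern: "kern M (P \<gamma>) C \<delta>0 \<nu> V lam b0 Vs" if "\<gamma> \<in> \<Gamma>" for \<gamma>
    unfolding kern_def using Pm that CM Cne nu snu d0 minor Vm V1 lam b0 drift Vs by blast
  let ?k = "kap lam b0 \<delta>0"
  have kp: "0 < ?k" "?k < 1" using kap_props[OF lam b0 d0] by auto
  define th where "th = 2 / (1 + ?k)"
  have th: "0 < th" "th * ?k < 1" "1 < th" using kp by (auto simp: th_def field_simps)
  define dd where "dd = min 1 \<delta>"
  have dd: "0 < dd" "dd \<le> \<delta>" using dl by (auto simp: dd_def)
  define pw where "pw = 2 + dd"
  define e where "e = 1/2 - \<delta>"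
  define r where "r = max (e * pw) (1/2)"
  have epw: "e * pw = 1 + dd / 2 - 2 * \<delta> - \<delta> * dd" by (simp add: e_def pw_def algebra_simps)
  have "\<delta> * dd > 0" using dl dd by simp
  then have "e * pw < 1" using epw dd dl by linarith
  then have r: "0 < r" "r < 1" "e * pw \<le> r" by (auto simp: r_def)
  have pw0: "0 \<le> pw" using dd by (simp add: pw_def)
  obtain C0 where C0: "C0 > 0" "\<forall>n. real (Suc n) powr (pw * (r / (1 - r) + 1)) \<le> C0 * th ^ n"
    using poly_geo_bound[OF th(3)] by blast
  define K' where "K' = max K 0"
  have K': "0 \<le> K'" by (simp add: K'_def)
  have fb: "\<forall>x\<in>space M. \<bar>f x\<bar> \<le> K' * V x powr e"
  proof
    fix x assume "x \<in> space M"
    then have "\<bar>f x\<bar> \<le> K * V x powr e" using Kf by (simp add: e_def)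
    also have "\<dots> \<le> K' * V x powr e" by (intro mult_right_mono) (auto simp: K'_def)
    finally show "\<bar>f x\<bar> \<le> K' * V x powr e" .
  qed
  define c1 where "c1 = K' powr pw"
  define C' where "C' = K' powr pw * C0"
  have c1: "0 \<le> c1" and C': "0 \<le> C'" using C0 by (auto simp: c1_def C'_def)
  have hyp: "\<bar>\<Sum>j\<le>n. f (xs ! j)\<bar> powr pw \<le> c1 * (\<Sum>j\<le>n. V (xs ! j)) + C' * th ^ n"
    if "length xs = Suc n" "set xs \<subseteq> space M" for n xs
    unfolding c1_def C'_def
    by (rule pointwise_bound[OF V1 fb K' pw0 r C0(2) that])
  define Bd where "Bd = (c1 * (1 / (1 - ?k)) + C' * (1 / (1 - th * ?k))) * (aW b0 \<delta>0 + (lam * Vs + b0) / \<delta>0)"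
  show "assumption_L M \<Gamma> P C \<delta>0 \<nu> f"
    unfolding assumption_L_def
  proof (intro exI[of _ dd] conjI ballI)
    show "0 < dd" by (rule dd(1))
  next
    fix \<gamma> assume "\<gamma> \<in> \<Gamma>"
    then interpret K: kern M "P \<gamma>" C \<delta>0 \<nu> V lam b0 Vs by (rule kern)
    show "(\<Sum>n. split_exp M (P \<gamma>) C \<delta>0 \<nu> n (\<lambda>zs. if regen_at n zs then 1 else 0)) = 1"
      by (rule K.goal1)
  next
    have "(SUP \<gamma>\<in>\<Gamma>. (\<Sum>n. split_exp M (P \<gamma>) C \<delta>0 \<nu> n
            (\<lambda>zs. if regen_at n zs
                  then ennreal (\<bar>\<Sum>j\<le>n. f (fst (zs ! j))\<bar> powr (2 + dd))
                  else 0))) \<le> ennreal Bd"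
    proof (rule SUP_least)
      fix \<gamma> assume "\<gamma> \<in> \<Gamma>"
      then interpret K: kern M "P \<gamma>" C \<delta>0 \<nu> V lam b0 Vs by (rule kern)
      show "(\<Sum>n. split_exp M (P \<gamma>) C \<delta>0 \<nu> n
            (\<lambda>zs. if regen_at n zs
                  then ennreal (\<bar>\<Sum>j\<le>n. f (fst (zs ! j))\<bar> powr (2 + dd))
                  else 0)) \<le> ennreal Bd"
        using K.goal2[OF c1 th(1,2) C' hyp] unfolding Bd_def K.WB_def pw_def by simp
    qed
    also have "\<dots> < \<infinity>" by simp
    finally show "(SUP \<gamma>\<in>\<Gamma>. (\<Sum>n. split_exp M (P \<gamma>) C \<delta>0 \<nu> n
            (\<lambda>zs. if regen_at n zs
                  then ennreal (\<bar>\<Sum>j\<le>n. f (fst (zs ! j))\<bar> powr (2 + dd))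
                  else 0))) < \<infinity>" .
  qed
qed

end
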